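(* For any $m,n\in\mathbb N$, the set $$\Delta'_{mn}=\{(p,q)\in(0,1/16)^2:\ S_1^m(A_{pq})\cap S_2^n(A_{pq})\neq\varnothing\}$$ is a closed subset of $(0,1/16)^2$ of two-dimensional Lebesgue measure zero.
   Context: For $p,q\in(0,1/2)$ let $S_1(x)=px$, $S_2(x)=qx$, $S_3(x)=px+1-p$, $S_4(x)=qx+1-q$, let $K_{pq}$ be the attractor of $\{S_1,S_2,S_3,S_4\}$ (the unique nonempty compact $K\subset\mathbb R$ with $K=\bigcup_{i=1}^4S_i(K)$), and let $A_{pq}=S_3(K_{pq})\cup S_4(K_{pq})$. In the definition of $\Delta'_{mn}$ all maps and sets correspond to the parameters $(p,q)$. *)

theory Defs
  imports "HOL-Analysis.Analysis"
begin

definition S1 :: "real \<Rightarrow> real \<Rightarrow> real \<Rightarrow> real" where "S1 p q x = p * x"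
definition S2 :: "real \<Rightarrow> real \<Rightarrow> real \<Rightarrow> real" where "S2 p q x = q * x"
definition S3 :: "real \<Rightarrow> real \<Rightarrow> real \<Rightarrow> real" where "S3 p q x = p * x + 1 - p"
definition S4 :: "real \<Rightarrow> real \<Rightarrow> real \<Rightarrow> real" where "S4 p q x = q * x + 1 - q"

definition attractor :: "real \<Rightarrow> real \<Rightarrow> real set" where
  "attractor p q = (THE K. K \<noteq> {} \<and> compact K \<and>
      K = S1 p q ` K \<union> S2 p q ` K \<union> S3 p q ` K \<union> S4 p q ` K)"

definition A_set :: "real \<Rightarrow> real \<Rightarrow> real set" where
  "A_set p q = S3 p q ` attractor p q \<union> S4 p q ` attractor p q"

definition Delta' :: "nat \<Rightarrow> nat \<Rightarrow> (real \<times> real) set" where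
  "Delta' m n = {(p, q). p \<in> {0<..<1/16} \<and> q \<in> {0<..<1/16} \<and>
      ((S1 p q ^^ m) ` A_set p q) \<inter> ((S2 p q ^^ n) ` A_set p q) \<noteq> {}}"

end

theory Submission
  imports Defs
begin

definition rr :: "real \<Rightarrow> real \<Rightarrow> bool \<times> bool \<Rightarrow> real" where
  "rr p q c = (if fst c then q else p)"
definition Sl :: "real \<Rightarrow> real \<Rightarrow> bool \<times> bool \<Rightarrow> real \<Rightarrow> real" where
  "Sl p q c x = rr p q c * x + (if snd c then 1 - rr p q c else 0)"
fun Sw :: "real \<Rightarrow> real \<Rightarrow> (bool \<times> bool) list \<Rightarrow> real \<Rightarrow> real" where
  "Sw p q [] x = x" | "Sw p q (c#u) x = Sl p q c (Sw p q u x)"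

lemma inv_iff: "S1 p q ` K \<union> S2 p q ` K \<union> S3 p q ` K \<union> S4 p q ` K = (\<Union>c. Sl p q c ` K)"
proof -
  have u: "(UNIV::(bool\<times>bool) set) = {(False,False),(True,False),(False,True),(True,True)}" by auto
  have e: "S1 p q = Sl p q (False,False)" "S2 p q = Sl p q (True,False)"
     "S3 p q = Sl p q (False,True)" "S4 p q = Sl p q (True,True)"
    by (auto simp: fun_eq_iff S1_def S2_def S3_def S4_def Sl_def rr_def)
  show ?thesis unfolding u e by auto
qed

lemma Sl_diff: "Sl p q c x - Sl p q c y = rr p q c * (x - y)"
  by (simp add: Sl_def right_diff_distrib)

lemma Sw_diff:
  assumes "0 \<le> p" "0 \<le> q"
  shows "\<bar>Sw p q u x - Sw p q u y\<bar> \<le> max p q ^ length u * \<bar>x - y\<bar>"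
proof (induction u)
  case Nil then show ?case by simp
next
  case (Cons c u)
  have r: "0 \<le> rr p q c" "rr p q c \<le> max p q" using assms by (auto simp: rr_def)
  have "\<bar>Sw p q (c#u) x - Sw p q (c#u) y\<bar> = rr p q c * \<bar>Sw p q u x - Sw p q u y\<bar>"
    using r by (simp add: Sl_diff abs_mult)
  also have "\<dots> \<le> max p q * (max p q ^ length u * \<bar>x - y\<bar>)"
    using r Cons by (intro mult_mono) auto
  finally show ?case by simp
qed

lemma Sl_range: "0 \<le> p \<Longrightarrow> p \<le> 1 \<Longrightarrow> 0 \<le> q \<Longrightarrow> q \<le> 1 \<Longrightarrow> 0 \<le> x \<Longrightarrow> x \<le> 1
  \<Longrightarrow> 0 \<le> Sl p q c x \<and> Sl p q c x \<le> 1"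
proof -
  assume a: "0 \<le> p" "p \<le> 1" "0 \<le> q" "q \<le> 1" "0 \<le> x" "x \<le> 1"
  define r where "r = rr p q c"
  have r: "0 \<le> r" "r \<le> 1" using a by (auto simp: r_def rr_def)
  have "r * x \<le> r" using r a by (simp add: mult_left_le)
  moreover have "0 \<le> r * x" using r a by simp
  ultimately show ?thesis using r unfolding Sl_def r_def[symmetric] by auto
qed

lemma Sw_range:
  assumes "0 \<le> p" "p \<le> 1" "0 \<le> q" "q \<le> 1" "0 \<le> x" "x \<le> 1"
  shows "0 \<le> Sw p q u x \<and> Sw p q u x \<le> 1"
proof (induction u)
  case Nil then show ?case using assms by simp
next
  case (Cons c u) then show ?case using assms Sl_range[of p q "Sw p q u x" c] by simp
qed

lemma Sw_append: "Sw p q (u @ v) x = Sw p q u (Sw p q v x)"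
  by (induction u) auto

lemma rr_lip: "\<bar>rr p q c - rr p' q' c\<bar> \<le> \<bar>p - p'\<bar> + \<bar>q - q'\<bar>"
  by (auto simp: rr_def)

lemma Sl_lip:
  assumes "0 \<le> y" "y \<le> 1" "0 \<le> p'" "p' \<le> 1/16" "0 \<le> q'" "q' \<le> 1/16"
  shows "\<bar>Sl p q c y - Sl p' q' c y'\<bar> \<le> (\<bar>p - p'\<bar> + \<bar>q - q'\<bar>) + \<bar>y - y'\<bar> / 16"
proof -
  define r where "r = rr p q c"
  define r' where "r' = rr p' q' c"
  define E where "E = \<bar>p - p'\<bar> + \<bar>q - q'\<bar>"
  have rE: "\<bar>r - r'\<bar> \<le> E" unfolding r_def r'_def E_def by (rule rr_lip)
  have r': "0 \<le> r'" "r' \<le> 1/16" using assms by (auto simp: r'_def rr_def)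
  have y1: "\<bar>y - 1\<bar> \<le> 1" "\<bar>y\<bar> \<le> 1" using assms by auto
  have "\<bar>r - r'\<bar> * \<bar>y - 1\<bar> \<le> E * 1" by (rule mult_mono) (use rE y1 in auto)
  then have m1: "\<bar>(r - r') * (y - 1)\<bar> \<le> E" by (simp add: abs_mult)
  have "\<bar>r - r'\<bar> * \<bar>y\<bar> \<le> E * 1" by (rule mult_mono) (use rE y1 in auto)
  then have m2: "\<bar>(r - r') * y\<bar> \<le> E" by (simp add: abs_mult)
  have "r' * \<bar>y - y'\<bar> \<le> (1/16) * \<bar>y - y'\<bar>" using r' by (intro mult_right_mono) auto
  then have m3: "\<bar>r' * (y - y')\<bar> \<le> \<bar>y - y'\<bar> / 16" using r' by (simp add: abs_mult)
  show ?thesis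
  proof (cases "snd c")
    case True
    have "Sl p q c y - Sl p' q' c y' = (r - r') * (y - 1) + r' * (y - y')"
      using True by (simp add: Sl_def r_def[symmetric] r'_def[symmetric] algebra_simps)
    then show ?thesis using m1 m3 unfolding E_def by linarith
  next
    case False
    have "Sl p q c y - Sl p' q' c y' = (r - r') * y + r' * (y - y')"
      using False by (simp add: Sl_def r_def[symmetric] r'_def[symmetric] algebra_simps)
    then show ?thesis using m2 m3 unfolding E_def by linarith
  qed
qed

lemma Sw_lip:
  assumes "0 \<le> p" "p \<le> 1/16" "0 \<le> q" "q \<le> 1/16" "0 \<le> p'" "p' \<le> 1/16" "0 \<le> q'" "q' \<le> 1/16"
    "0 \<le> x" "x \<le> 1"
  shows "\<bar>Sw p q u x - Sw p' q' u x\<bar> \<le> 2 * (\<bar>p - p'\<bar> + \<bar>q - q'\<bar>)"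
proof (induction u)
  case Nil then show ?case by simp
next
  case (Cons c u)
  have y: "0 \<le> Sw p q u x" "Sw p q u x \<le> 1" using Sw_range[of p q x u] assms by auto
  have "\<bar>Sw p q (c#u) x - Sw p' q' (c#u) x\<bar> \<le> (\<bar>p - p'\<bar> + \<bar>q - q'\<bar>) + \<bar>Sw p q u x - Sw p' q' u x\<bar> / 16"
    using Sl_lip[OF y assms(5-8)] by simp
  also have "\<dots> \<le> 2 * (\<bar>p - p'\<bar> + \<bar>q - q'\<bar>)" using Cons by simp
  finally show ?case .
qed

definition Kc :: "real \<Rightarrow> real \<Rightarrow> real set" where
  "Kc p q = closure (range (\<lambda>u. Sw p q u 0))"

lemma Kc_sub: assumes "0 \<le> p" "p \<le> 1" "0 \<le> q" "q \<le> 1" shows "Kc p q \<subseteq> {0..1}"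
  unfolding Kc_def using Sw_range[OF assms, of 0]
  by (intro closure_minimal) auto

lemma Kc_compact: assumes "0 \<le> p" "p \<le> 1" "0 \<le> q" "q \<le> 1" shows "compact (Kc p q)"
  unfolding compact_eq_bounded_closed
proof
  show "bounded (Kc p q)" using Kc_sub[OF assms] bounded_closed_interval bounded_subset by blast
  show "closed (Kc p q)" unfolding Kc_def by simp
qed

lemma Kc_ne: "Kc p q \<noteq> {}"
  unfolding Kc_def by auto

lemma Sw0_Kc: "Sw p q u 0 \<in> Kc p q"
  unfolding Kc_def by (meson closure_subset rangeI subsetD)

lemma cont_Sl: "continuous_on S (Sl p q c)"
  unfolding Sl_def by (intro continuous_intros)

lemma Kc_inv: assumes "0 \<le> p" "p \<le> 1" "0 \<le> q" "q \<le> 1"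
  shows "(\<Union>c. Sl p q c ` Kc p q) = Kc p q"
proof
  show "(\<Union>c. Sl p q c ` Kc p q) \<subseteq> Kc p q"
  proof (intro UN_least)
    fix c
    show "Sl p q c ` Kc p q \<subseteq> Kc p q" unfolding Kc_def
      apply (rule image_closure_subset[OF cont_Sl closed_closure])
      using Sw0_Kc[of p q "c # _"] by (auto simp: Kc_def)
  qed
next
  have cl: "closed (\<Union>c. Sl p q c ` Kc p q)"
    by (intro closed_Union) (auto intro!: compact_imp_closed compact_continuous_image cont_Sl Kc_compact assms)
  have "range (\<lambda>u. Sw p q u 0) \<subseteq> (\<Union>c. Sl p q c ` Kc p q)"
  proof
    fix x assume "x \<in> range (\<lambda>u. Sw p q u 0)"
    then obtain u where x: "x = Sw p q u 0" by auto
    show "x \<in> (\<Union>c. Sl p q c ` Kc p q)"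
    proof (cases u)
      case Nil
      have "x = Sl p q (False,False) (Sw p q [] 0)" using Nil x by (simp add: Sl_def)
      then show ?thesis using Sw0_Kc by blast
    next
      case (Cons c u')
      have "x \<in> Sl p q c ` Kc p q" using x Cons Sw0_Kc[of p q u'] by auto
      then show ?thesis by blast
    qed
  qed
  then show "Kc p q \<subseteq> (\<Union>c. Sl p q c ` Kc p q)" unfolding Kc_def
    using cl closure_minimal by (metis Kc_def)
qed

lemma inv_words:
  assumes "K = (\<Union>c. Sl p q c ` K)" "a \<in> K"
  shows "\<exists>u x. length u = k \<and> x \<in> K \<and> a = Sw p q u x"
proof (induction k)
  case 0 then show ?case using assms by (intro exI[of _ "[]"]) auto
next
  case (Suc k)
  then obtain u x where ux: "length u = k" "x \<in> K" "a = Sw p q u x" by auto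
  then obtain c y where "y \<in> K" "x = Sl p q c y" using assms(1) by blast
  then show ?case using ux by (intro exI[of _ "u @ [c]"] exI[of _ y]) (auto simp: Sw_append)
qed

lemma inv_closed_Sw:
  assumes "K = (\<Union>c. Sl p q c ` K)" "y \<in> K"
  shows "Sw p q u y \<in> K"
proof (induction u)
  case Nil then show ?case using assms by simp
next
  case (Cons c u) then show ?case using assms(1) by auto
qed

lemma inv_subset:
  assumes p: "0 < p" "p < 1" "0 < q" "q < 1"
    and K: "compact K" "K = (\<Union>c. Sl p q c ` K)"
    and K': "compact K'" "K' \<noteq> {}" "K' = (\<Union>c. Sl p q c ` K')"
  shows "K \<subseteq> K'"
proof
  fix a assume a: "a \<in> K"
  obtain y0 where y0: "y0 \<in> K'" using K' by auto
  obtain B where B: "\<forall>x\<in>K. \<bar>x\<bar> \<le> B" using K(1) compact_imp_bounded bounded_real by blast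
  define M where "M = max p q"
  have M: "0 < M" "M < 1" using p by (auto simp: M_def)
  have "\<forall>e>0. \<exists>y\<in>K'. dist y a < e"
  proof (intro allI impI)
    fix e :: real assume e: "e > 0"
    have "0 \<le> B" using B a by force
    then have "0 < e / (B + \<bar>y0\<bar> + 1)" using e by (intro divide_pos_pos) auto
    then obtain k where k: "M ^ k < e / (B + \<bar>y0\<bar> + 1)" using real_arch_pow_inv M by blast
    obtain u x where ux: "length u = k" "x \<in> K" "a = Sw p q u x" using inv_words[OF K(2) a] by blast
    have "Sw p q u y0 \<in> K'" using inv_closed_Sw[OF K'(3) y0] .
    moreover have "\<bar>Sw p q u y0 - a\<bar> \<le> M ^ k * \<bar>y0 - x\<bar>"
      using Sw_diff[of p q u y0 x] p ux by (simp add: M_def)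
    moreover have "\<bar>y0 - x\<bar> \<le> B + \<bar>y0\<bar>" using B ux by force
    moreover have "M ^ k * (B + \<bar>y0\<bar>) < e"
    proof -
      have bp: "0 < B + \<bar>y0\<bar> + 1" using B a by force
      have "M ^ k * (B + \<bar>y0\<bar>) \<le> M ^ k * (B + \<bar>y0\<bar> + 1)" using M by simp
      also have "\<dots> < e" using k bp by (simp add: pos_less_divide_eq)
      finally show ?thesis .
    qed
    ultimately have "dist (Sw p q u y0) a < e" unfolding dist_real_def
    proof -
      assume h: "Sw p q u y0 \<in> K'" "\<bar>Sw p q u y0 - a\<bar> \<le> M ^ k * \<bar>y0 - x\<bar>"
        "\<bar>y0 - x\<bar> \<le> B + \<bar>y0\<bar>" "M ^ k * (B + \<bar>y0\<bar>) < e"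
      have "M ^ k * \<bar>y0 - x\<bar> \<le> M ^ k * (B + \<bar>y0\<bar>)"
        using h(3) M by (intro mult_left_mono) auto
      then show "\<bar>Sw p q u y0 - a\<bar> < e" using h by linarith
    qed
    then show "\<exists>y\<in>K'. dist y a < e" using \<open>Sw p q u y0 \<in> K'\<close> by blast
  qed
  then show "a \<in> K'" using closed_approachable[of K' a] compact_imp_closed[OF K'(1)] by blast
qed

lemma attractor_eq:
  assumes p: "0 < p" "p < 1" "0 < q" "q < 1"
  shows "attractor p q = Kc p q"
  unfolding attractor_def inv_iff
proof (rule the_equality)
  have p': "0 \<le> p" "p \<le> 1" "0 \<le> q" "q \<le> 1" using p by auto
  show "Kc p q \<noteq> {} \<and> compact (Kc p q) \<and> Kc p q = (\<Union>c. Sl p q c ` Kc p q)"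
    using Kc_ne Kc_compact[OF p'] Kc_inv[OF p'] by auto
  fix K assume K: "K \<noteq> {} \<and> compact K \<and> K = (\<Union>c. Sl p q c ` K)"
  show "K = Kc p q"
  proof
    show "K \<subseteq> Kc p q" using inv_subset[OF p, of K "Kc p q"] K Kc_ne Kc_compact[OF p'] Kc_inv[OF p'] by auto
    show "Kc p q \<subseteq> K" using inv_subset[OF p, of "Kc p q" K] K Kc_ne Kc_compact[OF p'] Kc_inv[OF p'] by auto
  qed
qed

lemma S34: "S3 p q = Sl p q (False,True)" "S4 p q = Sl p q (True,True)"
  by (auto simp: fun_eq_iff S3_def S4_def Sl_def rr_def)

definition sq :: "(real \<times> real) set" where "sq = {0<..<1/16} \<times> {0<..<1/16}"

lemma A_char:
  assumes "0 < p" "p < 1/16" "0 < q" "q < 1/16"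
  shows "a \<in> A_set p q \<longleftrightarrow> (\<exists>c x. snd c \<and> x \<in> Kc p q \<and> a = Sl p q c x)"
proof -
  have at: "attractor p q = Kc p q" using assms by (intro attractor_eq) auto
  show ?thesis unfolding A_set_def at S34
  proof
    assume "a \<in> Sl p q (False, True) ` Kc p q \<union> Sl p q (True, True) ` Kc p q"
    then show "\<exists>c x. snd c \<and> x \<in> Kc p q \<and> a = Sl p q c x" by auto
  next
    assume "\<exists>c x. snd c \<and> x \<in> Kc p q \<and> a = Sl p q c x"
    then obtain b x where "x \<in> Kc p q" "a = Sl p q (b, True) x"
      by (metis prod.collapse)
    then show "a \<in> Sl p q (False, True) ` Kc p q \<union> Sl p q (True, True) ` Kc p q"
      by (cases b) auto
  qed
qed

lemma A_range:
  assumes "0 < p" "p < 1/16" "0 < q" "q < 1/16" "a \<in> A_set p q"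
  shows "15/16 \<le> a \<and> a \<le> 1"
proof -
  obtain c x where cx: "snd c" "x \<in> Kc p q" "a = Sl p q c x" using A_char assms by blast
  have x: "0 \<le> x" "x \<le> 1" using Kc_sub[of p q] cx assms by auto
  define r where "r = rr p q c"
  have r: "0 \<le> r" "r \<le> 1/16" using assms by (auto simp: r_def rr_def)
  have a: "a = r * x + 1 - r" using cx by (simp add: Sl_def r_def)
  have "r * x \<le> r" using r x by (simp add: mult_left_le)
  moreover have "0 \<le> r * x" using r x by simp
  ultimately show ?thesis using a r by auto
qed

lemma A_word:
  assumes "0 < p" "p < 1/16" "0 < q" "q < 1/16" "w \<noteq> []" "snd (hd w)"
  shows "Sw p q w 0 \<in> A_set p q"
proof -
  obtain c u where w: "w = c # u" using assms by (cases w) auto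
  show ?thesis unfolding A_char[OF assms(1-4)] w
    by (intro exI[of _ c] exI[of _ "Sw p q u 0"]) (use assms w Sw0_Kc in auto)
qed

lemma A_approx:
  assumes "0 < p" "p < 1/16" "0 < q" "q < 1/16" "a \<in> A_set p q"
  shows "\<exists>w. length w = Suc k \<and> snd (hd w) \<and> \<bar>a - Sw p q w 0\<bar> \<le> max p q ^ Suc k"
proof -
  have p': "0 \<le> p" "p \<le> 1" "0 \<le> q" "q \<le> 1" using assms by auto
  obtain c x where cx: "snd c" "x \<in> Kc p q" "a = Sl p q c x" using A_char assms by blast
  obtain u y where uy: "length u = k" "y \<in> Kc p q" "x = Sw p q u y"
    using inv_words[OF Kc_inv[OF p', symmetric] cx(2)] by blast
  have y: "0 \<le> y" "y \<le> 1" using Kc_sub[OF p'] uy by auto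
  have "\<bar>Sw p q (c#u) y - Sw p q (c#u) 0\<bar> \<le> max p q ^ length (c#u) * \<bar>y - 0\<bar>"
    by (rule Sw_diff) (use assms in auto)
  also have "\<dots> \<le> max p q ^ Suc k * 1" using uy y assms by (simp add: mult_left_le)
  finally show ?thesis using cx uy by (intro exI[of _ "c#u"]) auto
qed

lemma funpow_S1: "(S1 p q ^^ m) x = p ^ m * x"
  by (induction m) (auto simp: S1_def)
lemma funpow_S2: "(S2 p q ^^ m) x = q ^ m * x"
  by (induction m) (auto simp: S2_def)

lemma Delta_alt: "Delta' m n = {(p, q). (p, q) \<in> sq \<and> (\<exists>a\<in>A_set p q. \<exists>b\<in>A_set p q. p ^ m * a = q ^ n * b)}"
proof -
  have e1: "S1 p q ^^ m = (\<lambda>x. p ^ m * x)" for p q by (rule ext) (rule funpow_S1)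
  have e2: "S2 p q ^^ n = (\<lambda>x. q ^ n * x)" for p q by (rule ext) (rule funpow_S2)
  have e3: "((\<lambda>x. p ^ m * x) ` A \<inter> (\<lambda>x. q ^ n * x) ` A \<noteq> {}) \<longleftrightarrow>
     (\<exists>a\<in>A. \<exists>b\<in>A. p ^ m * a = q ^ n * b)" for p q :: real and A by blast
  show ?thesis unfolding Delta'_def sq_def e1 e2 e3 by auto
qed

lemma pow_lip:
  fixes x y :: real
  assumes "\<bar>x\<bar> \<le> 1" "\<bar>y\<bar> \<le> 1"
  shows "\<bar>x ^ m - y ^ m\<bar> \<le> m * \<bar>x - y\<bar>"
proof (induction m)
  case 0 then show ?case by simp
next
  case (Suc m)
  have "x ^ Suc m - y ^ Suc m = x * (x ^ m - y ^ m) + y ^ m * (x - y)" by (simp add: algebra_simps)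
  moreover have "\<bar>x * (x ^ m - y ^ m)\<bar> \<le> \<bar>x ^ m - y ^ m\<bar>"
    using assms by (simp add: abs_mult mult_left_le_one_le)
  moreover have "\<bar>y ^ m * (x - y)\<bar> \<le> \<bar>x - y\<bar>"
    using assms by (simp add: abs_mult power_abs mult_left_le_one_le power_le_one)
  ultimately show ?case using Suc by (simp add: algebra_simps)
qed

lemma A_compact:
  assumes "0 < p" "p < 1/16" "0 < q" "q < 1/16"
  shows "compact (A_set p q)"
proof -
  have at: "attractor p q = Kc p q" using assms by (intro attractor_eq) auto
  have p': "0 \<le> p" "p \<le> 1" "0 \<le> q" "q \<le> 1" using assms by auto
  show ?thesis unfolding A_set_def at S34
    by (intro compact_Un compact_continuous_image cont_Sl Kc_compact[OF p'])
qed

lemma prod_err: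
  fixes P P' a a' :: real
  assumes "\<bar>a\<bar> \<le> 1" "\<bar>P'\<bar> \<le> 1"
  shows "\<bar>P * a - P' * a'\<bar> \<le> \<bar>P - P'\<bar> + \<bar>a - a'\<bar>"
proof -
  have "P * a - P' * a' = (P - P') * a + P' * (a - a')" by (simp add: algebra_simps)
  moreover have "\<bar>(P - P') * a\<bar> \<le> \<bar>P - P'\<bar>" using assms by (simp add: abs_mult mult_left_le)
  moreover have "\<bar>P' * (a - a')\<bar> \<le> \<bar>a - a'\<bar>" using assms by (simp add: abs_mult mult_left_le_one_le)
  ultimately show ?thesis by linarith
qed

lemma lin_aux:
  fixes mP mE nQ nE Z X Y Pm Qn A B t dp dq e d :: real
  assumes "mP \<le> mE" "nQ \<le> nE" "Z \<le> X + Y" "X \<le> Pm + A" "Y \<le> Qn + B"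
    "Pm \<le> mP" "Qn \<le> nQ" "A \<le> t + 2 * (dp + dq)" "B \<le> t + 2 * (dp + dq)"
    "dp < e" "dq < e" "t < d / 8"
  shows "Z < mE + nE + 8 * e + d / 4"
  using assms unfolding distrib_left by linarith

lemma sq_iff: "(p, q) \<in> sq \<longleftrightarrow> 0 < p \<and> p < 1/16 \<and> 0 < q \<and> q < 1/16"
  by (auto simp: sq_def)

lemma open_compl:
  assumes pq: "(p, q) \<in> sq" and nD: "(p, q) \<notin> Delta' m n"
  shows "\<exists>e>0. \<forall>p' q'. (p', q') \<in> sq \<longrightarrow> \<bar>p' - p\<bar> < e \<longrightarrow> \<bar>q' - q\<bar> < e \<longrightarrow> (p', q') \<notin> Delta' m n"
proof -
  have p: "0 < p" "p < 1/16" "0 < q" "q < 1/16" using pq by (auto simp: sq_iff)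
  have no: "\<forall>a\<in>A_set p q. \<forall>b\<in>A_set p q. p ^ m * a \<noteq> q ^ n * b"
    using nD pq unfolding Delta_alt by auto
  define f where "f = (\<lambda>z::real\<times>real. \<bar>p ^ m * fst z - q ^ n * snd z\<bar>)"
  define C where "C = f ` (A_set p q \<times> A_set p q)"
  have "continuous_on (A_set p q \<times> A_set p q) f" unfolding f_def by (intro continuous_intros)
  then have cC: "compact C" unfolding C_def
    by (intro compact_continuous_image compact_Times A_compact p)
  have "Sw p q [(False,True)] 0 \<in> A_set p q" by (rule A_word) (use p in auto)
  then have neC: "C \<noteq> {}" unfolding C_def by auto
  obtain d where d: "d \<in> C" "\<forall>y\<in>C. d \<le> y" using compact_attains_inf[OF cC neC] by blast
  have dpos: "d > 0" using d(1) no unfolding C_def f_def by auto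
  have dle: "d \<le> \<bar>p ^ m * a - q ^ n * b\<bar>" if "a \<in> A_set p q" "b \<in> A_set p q" for a b
    using d(2) that unfolding C_def f_def by auto
  obtain k where k: "(1/16::real) ^ k < d / 8" using real_arch_pow_inv[of "d/8" "1/16::real"] dpos by auto
  define t where "t = (1/16::real) ^ Suc k"
  have "0 \<le> (1/16::real) ^ k" by simp
  moreover have "t = (1/16) * (1/16::real) ^ k" by (simp add: t_def)
  ultimately have t: "0 \<le> t" "t < d / 8" using k by linarith+
  define e where "e = d / (8 * (real m + real n + 8))"
  have epos: "e > 0" using dpos by (simp add: e_def)
  have "real m + real n + 8 > 0" by simp
  then have e8: "(real m + real n + 8) * e = d / 8" unfolding e_def by (simp add: field_simps)
  show ?thesis
  proof (intro exI[of _ e] conjI allI impI epos)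
    fix p' q' assume pq': "(p', q') \<in> sq" and dp: "\<bar>p' - p\<bar> < e" and dq: "\<bar>q' - q\<bar> < e"
    have p': "0 < p'" "p' < 1/16" "0 < q'" "q' < 1/16" using pq' by (auto simp: sq_iff)
    show "(p', q') \<notin> Delta' m n"
    proof
      assume "(p', q') \<in> Delta' m n"
      then obtain a' b' where ab': "a' \<in> A_set p' q'" "b' \<in> A_set p' q'" "p' ^ m * a' = q' ^ n * b'"
        unfolding Delta_alt by auto
      have Mt: "max p' q' ^ Suc k \<le> t" unfolding t_def using p' by (intro power_mono) auto
      obtain wa where wa: "length wa = Suc k" "snd (hd wa)" "\<bar>a' - Sw p' q' wa 0\<bar> \<le> max p' q' ^ Suc k"
        using A_approx[OF p' ab'(1)] by blast
      obtain wb where wb: "length wb = Suc k" "snd (hd wb)" "\<bar>b' - Sw p' q' wb 0\<bar> \<le> max p' q' ^ Suc k"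
        using A_approx[OF p' ab'(2)] by blast
      define a where "a = Sw p q wa 0"
      define b where "b = Sw p q wb 0"
      have aA: "a \<in> A_set p q" unfolding a_def using wa by (intro A_word p) auto
      have bA: "b \<in> A_set p q" unfolding b_def using wb by (intro A_word p) auto
      have la: "\<bar>Sw p q wa 0 - Sw p' q' wa 0\<bar> \<le> 2 * (\<bar>p - p'\<bar> + \<bar>q - q'\<bar>)"
        by (rule Sw_lip) (use p p' in auto)
      have lb: "\<bar>Sw p q wb 0 - Sw p' q' wb 0\<bar> \<le> 2 * (\<bar>p - p'\<bar> + \<bar>q - q'\<bar>)"
        by (rule Sw_lip) (use p p' in auto)
      have aa: "\<bar>a - a'\<bar> \<le> t + 2 * (\<bar>p - p'\<bar> + \<bar>q - q'\<bar>)" using la wa(3) Mt unfolding a_def by linarith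
      have bb: "\<bar>b - b'\<bar> \<le> t + 2 * (\<bar>p - p'\<bar> + \<bar>q - q'\<bar>)" using lb wb(3) Mt unfolding b_def by linarith
      have a1: "\<bar>a\<bar> \<le> 1" "\<bar>b\<bar> \<le> 1" using A_range[OF p aA] A_range[OF p bA] by auto
      have pm: "\<bar>p' ^ m\<bar> \<le> 1" "\<bar>q' ^ n\<bar> \<le> 1" using p' by (auto simp: power_abs power_le_one)
      have e1: "\<bar>p ^ m * a - p' ^ m * a'\<bar> \<le> \<bar>p ^ m - p' ^ m\<bar> + \<bar>a - a'\<bar>"
        by (rule prod_err[OF a1(1) pm(1)])
      have e2: "\<bar>q ^ n * b - q' ^ n * b'\<bar> \<le> \<bar>q ^ n - q' ^ n\<bar> + \<bar>b - b'\<bar>"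
        by (rule prod_err[OF a1(2) pm(2)])
      have l1: "\<bar>p ^ m - p' ^ m\<bar> \<le> m * \<bar>p - p'\<bar>" by (rule pow_lip) (use p p' in auto)
      have l2: "\<bar>q ^ n - q' ^ n\<bar> \<le> n * \<bar>q - q'\<bar>" by (rule pow_lip) (use p p' in auto)
      have "m * \<bar>p - p'\<bar> \<le> m * e" using dp by (intro mult_left_mono) auto
      moreover have "n * \<bar>q - q'\<bar> \<le> n * e" using dq by (intro mult_left_mono) auto
      moreover have "p ^ m * a - q ^ n * b = (p ^ m * a - p' ^ m * a') - (q ^ n * b - q' ^ n * b')"
        using ab'(3) by simp
      moreover have "\<bar>(p ^ m * a - p' ^ m * a') - (q ^ n * b - q' ^ n * b')\<bar>
          \<le> \<bar>p ^ m * a - p' ^ m * a'\<bar> + \<bar>q ^ n * b - q' ^ n * b'\<bar>" by (rule abs_triangle_ineq4)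
      moreover have "\<bar>p - p'\<bar> < e" "\<bar>q - q'\<bar> < e" using dp dq by (simp_all add: abs_minus_commute)
      ultimately have "\<bar>p ^ m * a - q ^ n * b\<bar> < real m * e + real n * e + 8 * e + d / 4"
        using lin_aux[OF _ _ _ e1 e2 l1 l2 aa bb _ _ t(2)] by (simp only: mult.commute)
      then have "\<bar>p ^ m * a - q ^ n * b\<bar> < (real m + real n + 8) * e + d / 4"
        by (simp add: distrib_right)
      then have "\<bar>p ^ m * a - q ^ n * b\<bar> < d" using e8 by linarith
      then show False using dle[OF aA bA] by linarith
    qed
  qed
qed

lemma D_closedin: "closedin (top_of_set sq) (Delta' m n)"
  unfolding closedin_def topspace_euclidean_subtopology
proof
  show "Delta' m n \<subseteq> sq" unfolding Delta_alt by auto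
  show "openin (top_of_set sq) (sq - Delta' m n)"
    unfolding openin_euclidean_subtopology_iff
  proof (intro conjI ballI)
    fix x assume x: "x \<in> sq - Delta' m n"
    obtain p q where xpq: "x = (p, q)" by fastforce
    obtain e where e: "e > 0" "\<forall>p' q'. (p', q') \<in> sq \<longrightarrow> \<bar>p' - p\<bar> < e \<longrightarrow> \<bar>q' - q\<bar> < e \<longrightarrow> (p', q') \<notin> Delta' m n"
      using open_compl[of p q m n] x xpq by auto
    show "\<exists>e>0. \<forall>x'\<in>sq. dist x' x < e \<longrightarrow> x' \<in> sq - Delta' m n"
    proof (intro exI[of _ e] conjI ballI impI e(1))
      fix x' assume x': "x' \<in> sq" "dist x' x < e"
      obtain p' q' where x'pq: "x' = (p', q')" by fastforce
      have "dist p' p < e" using dist_fst_le[of x' x] x' x'pq xpq by auto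
      moreover have "dist q' q < e" using dist_snd_le[of x' x] x' x'pq xpq by auto
      ultimately show "x' \<in> sq - Delta' m n" using e x' x'pq by (auto simp: dist_real_def)
    qed
  qed auto
qed

lemma pow_diff_lower:
  fixes x y :: real
  assumes "0 \<le> x" "x \<le> y" "n \<ge> 1"
  shows "x ^ (n - 1) * (y - x) \<le> y ^ n - x ^ n"
proof -
  obtain k where n: "n = Suc k" using assms by (cases n) auto
  have "x ^ k \<le> y ^ k" using assms by (intro power_mono) auto
  then have "y * x ^ k \<le> y * y ^ k" using assms by (intro mult_left_mono) auto
  then show ?thesis unfolding n by (simp add: algebra_simps)
qed

lemma key:
  fixes P a1 a2 b1 b2 al1 al2 be1 be2 q1 q2 e :: real
  assumes n: "n \<ge> 1" and q: "0 < q1" "q1 \<le> q2" "q2 \<le> 1/16" and P: "0 \<le> P"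
    and a: "15/16 \<le> a1" "a1 \<le> 1" "15/16 \<le> a2" "a2 \<le> 1"
    and b: "15/16 \<le> b1" "b1 \<le> 1" "15/16 \<le> b2" "b2 \<le> 1"
    and eq: "P * a1 = q1 ^ n * b1" "P * a2 = q2 ^ n * b2"
    and e: "0 \<le> e" "e \<le> 1/16"
    and ap: "\<bar>a1 - al1\<bar> \<le> e" "\<bar>a2 - al2\<bar> \<le> e" "\<bar>b1 - be1\<bar> \<le> e" "\<bar>b2 - be2\<bar> \<le> e"
    and lip: "\<bar>al1 - al2\<bar> \<le> 2 * (q2 - q1)" "\<bar>be1 - be2\<bar> \<le> 2 * (q2 - q1)"
  shows "q2 - q1 \<le> e"
proof -
  define d where "d = q2 - q1"
  define Y where "Y = q1 ^ (n - 1)"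
  define X1 where "X1 = q1 ^ n"
  define X2 where "X2 = q2 ^ n"
  have d: "0 \<le> d" using q by (simp add: d_def)
  have Y: "0 < Y" using q by (simp add: Y_def)
  have X1Y: "X1 = q1 * Y" using n unfolding X1_def Y_def by (cases n) auto
  have X1: "0 \<le> X1" "0 \<le> X2" using q by (auto simp: X1_def X2_def)
  have h1: "Y * d \<le> X2 - X1" using pow_diff_lower[of q1 q2 n] q n unfolding Y_def d_def X1_def X2_def by auto
  have "P * (15/16) \<le> P * a1" using P a by (intro mult_left_mono) auto
  moreover have "X1 * b1 \<le> X1" using X1 b by (simp add: mult_left_le)
  ultimately have h2: "P \<le> (16/15) * X1" using eq(1) unfolding X1_def by linarith
  have "X2 * (15/16) \<le> X2 * b2" using X1 b by (intro mult_left_mono) auto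
  moreover have "P * a2 \<le> P" using P a by (simp add: mult_left_le)
  ultimately have h3: "X2 \<le> (16/15) * P" using eq(2) unfolding X2_def by linarith
  have h4: "X1 \<le> (1/16) * Y" unfolding X1Y using q Y by (intro mult_right_mono) auto
  have PY: "P \<le> (1/15) * Y" using h2 h4 by linarith
  have X2Y: "X2 \<le> (16/225) * Y" using h3 PY by linarith
  have G1: "P * al1 - X1 * be1 = P * (al1 - a1) - X1 * (be1 - b1)"
    using eq(1) unfolding X1_def by (simp add: algebra_simps)
  have G2: "P * al2 - X2 * be2 = P * (al2 - a2) - X2 * (be2 - b2)"
    using eq(2) unfolding X2_def by (simp add: algebra_simps)
  have m1: "\<bar>P * (al1 - a1)\<bar> \<le> P * e" using P ap by (simp add: abs_mult abs_minus_commute mult_left_mono)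
  have m2: "\<bar>X1 * (be1 - b1)\<bar> \<le> X1 * e" using X1 ap by (simp add: abs_mult abs_minus_commute mult_left_mono)
  have m3: "\<bar>P * (al2 - a2)\<bar> \<le> P * e" using P ap by (simp add: abs_mult abs_minus_commute mult_left_mono)
  have m4: "\<bar>X2 * (be2 - b2)\<bar> \<le> X2 * e" using X1 ap by (simp add: abs_mult abs_minus_commute mult_left_mono)
  have m5: "\<bar>P * (al1 - al2)\<bar> \<le> 2 * (P * d)"
  proof -
    have "\<bar>P * (al1 - al2)\<bar> = P * \<bar>al1 - al2\<bar>" using P by (simp add: abs_mult)
    also have "\<dots> \<le> P * (2 * (q2 - q1))" by (rule mult_left_mono[OF lip(1) P])
    also have "\<dots> = 2 * (P * d)" by (simp add: d_def)
    finally show ?thesis .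
  qed
  have m6: "\<bar>X1 * (be2 - be1)\<bar> \<le> 2 * (X1 * d)"
  proof -
    have "\<bar>X1 * (be2 - be1)\<bar> = X1 * \<bar>be1 - be2\<bar>" using X1 by (simp add: abs_mult abs_minus_commute)
    also have "\<dots> \<le> X1 * (2 * (q2 - q1))" by (rule mult_left_mono[OF lip(2) X1(1)])
    also have "\<dots> = 2 * (X1 * d)" by (simp add: d_def)
    finally show ?thesis .
  qed
  have id: "(X2 - X1) * be2 = (P * al1 - X1 * be1) - (P * al2 - X2 * be2) - P * (al1 - al2) - X1 * (be2 - be1)"
    by (simp add: algebra_simps)
  have S: "(X2 - X1) * be2 \<le> P * e + X1 * e + P * e + X2 * e + 2 * (P * d) + 2 * (X1 * d)"
    using id G1 G2 m1 m2 m3 m4 m5 m6 by (smt (verit))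
  have "b2 - be2 \<le> e" using ap(4) by (simp add: abs_le_iff)
  then have be2: "7/8 \<le> be2" using b(3) e(2) by linarith
  have "0 \<le> Y * d" using Y d by simp
  then have L: "Y * d * (7/8) \<le> (X2 - X1) * be2" using h1 be2 by (intro mult_mono) auto
  have u1: "P * e \<le> (1/15) * (Y * e)" using mult_right_mono[OF PY e(1)] by (simp only: mult.assoc)
  have u2: "X1 * e \<le> (1/16) * (Y * e)" using mult_right_mono[OF h4 e(1)] by (simp only: mult.assoc)
  have u3: "X2 * e \<le> (16/225) * (Y * e)" using mult_right_mono[OF X2Y e(1)] by (simp only: mult.assoc)
  have u4: "P * d \<le> (1/15) * (Y * d)" using mult_right_mono[OF PY d] by (simp only: mult.assoc)
  have u5: "X1 * d \<le> (1/16) * (Y * d)" using mult_right_mono[OF h4 d] by (simp only: mult.assoc)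
  have "0 \<le> Y * e" using Y e by simp
  then have "Y * d \<le> Y * e" using S L u1 u2 u3 u4 u5 by linarith
  then show ?thesis using Y by (simp add: d_def)
qed


definition Qs :: "nat \<Rightarrow> nat \<Rightarrow> real \<Rightarrow> real \<Rightarrow> real \<Rightarrow> (bool \<times> bool) list \<Rightarrow> (bool \<times> bool) list \<Rightarrow> real set" where
  "Qs m n p \<rho> e u v = {q. 0 < q \<and> q \<le> \<rho> \<and> (\<exists>a b. a \<in> A_set p q \<and> b \<in> A_set p q \<and> p ^ m * a = q ^ n * b
      \<and> \<bar>a - Sw p q u 0\<bar> \<le> e \<and> \<bar>b - Sw p q v 0\<bar> \<le> e)}"

lemma Qs_diam_aux:
  assumes n: "n \<ge> 1" and p: "0 < p" "p \<le> \<rho>" "\<rho> < 1/16" and e: "0 \<le> e" "e \<le> 1/16"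
    and q: "q1 \<in> Qs m n p \<rho> e u v" "q2 \<in> Qs m n p \<rho> e u v" "q1 \<le> q2"
  shows "q2 - q1 \<le> e"
proof -
  obtain a1 b1 where 1: "0 < q1" "q1 \<le> \<rho>" "a1 \<in> A_set p q1" "b1 \<in> A_set p q1" "p ^ m * a1 = q1 ^ n * b1"
      "\<bar>a1 - Sw p q1 u 0\<bar> \<le> e" "\<bar>b1 - Sw p q1 v 0\<bar> \<le> e"
    using q(1) unfolding Qs_def by blast
  obtain a2 b2 where 2: "0 < q2" "q2 \<le> \<rho>" "a2 \<in> A_set p q2" "b2 \<in> A_set p q2" "p ^ m * a2 = q2 ^ n * b2"
      "\<bar>a2 - Sw p q2 u 0\<bar> \<le> e" "\<bar>b2 - Sw p q2 v 0\<bar> \<le> e"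
    using q(2) unfolding Qs_def by blast
  have pq1: "0 < p" "p < 1/16" "0 < q1" "q1 < 1/16" using p 1 by auto
  have pq2: "0 < p" "p < 1/16" "0 < q2" "q2 < 1/16" using p 2 by auto
  have ra1: "15/16 \<le> a1 \<and> a1 \<le> 1" by (rule A_range[OF pq1 1(3)])
  have rb1: "15/16 \<le> b1 \<and> b1 \<le> 1" by (rule A_range[OF pq1 1(4)])
  have ra2: "15/16 \<le> a2 \<and> a2 \<le> 1" by (rule A_range[OF pq2 2(3)])
  have rb2: "15/16 \<le> b2 \<and> b2 \<le> 1" by (rule A_range[OF pq2 2(4)])
  have l1: "\<bar>Sw p q1 u 0 - Sw p q2 u 0\<bar> \<le> 2 * (\<bar>p - p\<bar> + \<bar>q1 - q2\<bar>)"
    by (rule Sw_lip) (use pq1 pq2 in auto)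
  have l2: "\<bar>Sw p q1 v 0 - Sw p q2 v 0\<bar> \<le> 2 * (\<bar>p - p\<bar> + \<bar>q1 - q2\<bar>)"
    by (rule Sw_lip) (use pq1 pq2 in auto)
  have dd: "\<bar>q1 - q2\<bar> = q2 - q1" using q(3) by simp
  show ?thesis
    by (rule key[OF n 1(1) q(3) _ _ _ _ _ _ _ _ _ _ 1(5) 2(5) e 1(6) 2(6) 1(7) 2(7)])
       (use pq2 ra1 rb1 ra2 rb2 l1 l2 dd in auto)
qed

lemma Qs_diam:
  assumes n: "n \<ge> 1" and p: "0 < p" "p \<le> \<rho>" "\<rho> < 1/16" and e: "0 \<le> e" "e \<le> 1/16"
    and q: "q1 \<in> Qs m n p \<rho> e u v" "q2 \<in> Qs m n p \<rho> e u v"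
  shows "\<bar>q1 - q2\<bar> \<le> e"
proof (cases "q1 \<le> q2")
  case True
  then show ?thesis using Qs_diam_aux[OF n p e q True] by simp
next
  case False
  then show ?thesis using Qs_diam_aux[OF n p e q(2) q(1)] by simp
qed

lemma card_words: "card {w::(bool\<times>bool) list. set w \<subseteq> UNIV \<and> length w = K} = 4 ^ K"
proof -
  have "card (UNIV :: (bool\<times>bool) set) = 4" by (simp add: card_UNIV_bool)
  moreover have "card {w::(bool\<times>bool) list. set w \<subseteq> UNIV \<and> length w = K} = card (UNIV::(bool\<times>bool) set) ^ K"
    by (rule card_lists_length_eq) simp
  ultimately show ?thesis by simp
qed

lemma slice_cover:
  assumes n: "n \<ge> 1" and p: "0 < p" "p \<le> \<rho>" "\<rho> < 1/16"
  shows "\<exists>F. F \<in> sets lborel \<and> {q. (p, q) \<in> Delta' m n \<and> q \<le> \<rho>} \<subseteq> F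
           \<and> emeasure lborel F \<le> ennreal (2 * (16 * \<rho>) ^ Suc k)"
proof -
  define K where "K = Suc k"
  define e where "e = \<rho> ^ K"
  have e0: "0 \<le> e" using p by (simp add: e_def)
  have "\<rho> ^ K \<le> \<rho>" unfolding K_def using p by (simp add: mult_left_le power_le_one)
  then have e1: "e \<le> 1/16" using p unfolding e_def by linarith
  define W where "W = {w::(bool\<times>bool) list. set w \<subseteq> UNIV \<and> length w = K}"
  have fW: "finite W" unfolding W_def by (rule finite_lists_length_eq) simp
  define Q where "Q = (\<lambda>x. Qs m n p \<rho> e (fst x) (snd x))"
  define B where "B = (\<lambda>x. if Q x = {} then {} else {(SOME q. q \<in> Q x) - e .. (SOME q. q \<in> Q x) + e})"
  define F where "F = (\<Union>x\<in>W \<times> W. B x)"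
  have Bs: "B x \<in> sets lborel" for x unfolding B_def by auto
  have Fs: "F \<in> sets lborel" unfolding F_def using fW Bs by (intro sets.finite_UN) auto
  have Bm: "emeasure lborel (B x) \<le> ennreal (2 * e)" for x
    unfolding B_def using e0 by (auto simp: ennreal_mult)
  have QB: "Q x \<subseteq> B x" for x
  proof
    fix q assume q: "q \<in> Q x"
    define c where "c = (SOME q. q \<in> Q x)"
    have c: "c \<in> Q x" unfolding c_def using q by (rule someI)
    have "\<bar>q - c\<bar> \<le> e" using Qs_diam[OF n p e0 e1] q c unfolding Q_def by blast
    then show "q \<in> B x" using q unfolding B_def c_def[symmetric] by (auto simp: abs_le_iff)
  qed
  have sub: "{q. (p, q) \<in> Delta' m n \<and> q \<le> \<rho>} \<subseteq> F"
  proof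
    fix q assume "q \<in> {q. (p, q) \<in> Delta' m n \<and> q \<le> \<rho>}"
    then have q: "(p, q) \<in> sq" "q \<le> \<rho>" and ab: "\<exists>a\<in>A_set p q. \<exists>b\<in>A_set p q. p ^ m * a = q ^ n * b"
      unfolding Delta_alt by auto
    have pq: "0 < p" "p < 1/16" "0 < q" "q < 1/16" using q by (auto simp: sq_iff)
    obtain a b where ab: "a \<in> A_set p q" "b \<in> A_set p q" "p ^ m * a = q ^ n * b" using ab by blast
    have M: "max p q ^ Suc k \<le> e" unfolding e_def K_def using p q pq by (intro power_mono) auto
    obtain wa where wa: "length wa = Suc k" "\<bar>a - Sw p q wa 0\<bar> \<le> max p q ^ Suc k"
      using A_approx[OF pq ab(1)] by blast
    obtain wb where wb: "length wb = Suc k" "\<bar>b - Sw p q wb 0\<bar> \<le> max p q ^ Suc k"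
      using A_approx[OF pq ab(2)] by blast
    have "q \<in> Q (wa, wb)" unfolding Q_def Qs_def using pq q ab wa wb M by fastforce
    moreover have "(wa, wb) \<in> W \<times> W" unfolding W_def K_def using wa wb by auto
    ultimately show "q \<in> F" unfolding F_def using QB by blast
  qed
  have "emeasure lborel F \<le> (\<Sum>x\<in>W \<times> W. emeasure lborel (B x))"
    unfolding F_def using fW Bs by (intro emeasure_subadditive_finite) auto
  also have "\<dots> \<le> (\<Sum>x\<in>W \<times> W. ennreal (2 * e))" by (intro sum_mono Bm)
  also have "\<dots> = of_nat (card (W \<times> W)) * ennreal (2 * e)" by simp
  also have "card (W \<times> W) = 16 ^ K" unfolding card_cartesian_product W_def card_words
    by (simp add: power_mult_distrib[symmetric])
  also have "of_nat (16 ^ K) * ennreal (2 * e) = ennreal (2 * (16 * \<rho>) ^ Suc k)"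
    unfolding ennreal_of_nat_eq_real_of_nat using e0
    by (simp add: ennreal_mult[symmetric] e_def K_def power_mult_distrib mult_ac)
  finally show ?thesis using Fs sub by blast
qed

lemma D_borel: "Delta' m n \<in> sets (borel :: (real \<times> real) measure)"
proof -
  obtain C where C: "closed C" "Delta' m n = sq \<inter> C" using D_closedin[of m n] closedin_closed by blast
  have "open sq" unfolding sq_def by (intro open_Times open_greaterThanLessThan)
  then show ?thesis unfolding C(2) using C(1) by (intro sets.Int borel_open borel_closed)
qed

lemma D_sets_prod: "Delta' m n \<in> sets (lborel \<Otimes>\<^sub>M (lborel :: real measure))"
  unfolding lborel_prod using D_borel by simp

lemma T_null:
  assumes n: "n \<ge> 1" and p: "0 < p" "p \<le> \<rho>" "\<rho> < 1/16"
  shows "{q. (p, q) \<in> Delta' m n \<and> q \<le> \<rho>} \<in> null_sets lborel"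
proof -
  define T where "T = {q. (p, q) \<in> Delta' m n \<and> q \<le> \<rho>}"
  have "Pair p -` Delta' m n \<in> sets (lborel :: real measure)"
    using sets_Pair1[OF D_sets_prod] .
  then have Ts: "T \<in> sets lborel"
  proof -
    assume h: "Pair p -` Delta' m n \<in> sets (lborel :: real measure)"
    have "T = (Pair p -` Delta' m n) \<inter> {..\<rho>}" unfolding T_def by auto
    then show ?thesis using h by simp
  qed
  have "emeasure lborel T \<le> 0"
  proof (rule ennreal_le_epsilon)
    fix \<epsilon> :: real assume \<epsilon>: "0 < \<epsilon>"
    have r: "0 < 16 * \<rho>" "16 * \<rho> < 1" using p by auto
    obtain k where k: "(16 * \<rho>) ^ k < \<epsilon> / 2" using real_arch_pow_inv[of "\<epsilon>/2" "16 * \<rho>"] \<epsilon> r by auto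
    have "(16 * \<rho>) ^ Suc k \<le> (16 * \<rho>) ^ k" using r by (simp add: mult_left_le)
    then have k': "2 * (16 * \<rho>) ^ Suc k \<le> \<epsilon>" using k by linarith
    obtain F where F: "F \<in> sets lborel" "T \<subseteq> F" "emeasure lborel F \<le> ennreal (2 * (16 * \<rho>) ^ Suc k)"
      using slice_cover[OF n p, of m k] unfolding T_def by blast
    have "emeasure lborel T \<le> emeasure lborel F" using F by (intro emeasure_mono) auto
    also have "\<dots> \<le> ennreal \<epsilon>" using F(3) k' by (meson ennreal_leI order_trans)
    finally show "emeasure lborel T \<le> 0 + ennreal \<epsilon>" by simp
  qed
  then have "emeasure lborel T = 0" by simp
  then show ?thesis using Ts unfolding T_def[symmetric] by auto
qed

lemma slice_null:
  assumes n: "n \<ge> 1"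
  shows "Pair p -` Delta' m n \<in> null_sets (lborel :: real measure)"
proof (cases "0 < p \<and> p < 1/16")
  case False
  then have "Pair p -` Delta' m n = {}" unfolding Delta_alt by (auto simp: sq_iff)
  then show ?thesis by simp
next
  case True
  define \<rho> where "\<rho> = (\<lambda>j::nat. max p (1/16 - 1 / (real j + 17)))"
  have \<rho>: "0 < p" "p \<le> \<rho> j" "\<rho> j < 1/16" for j
  proof -
    have "0 < 1 / (real j + 17)" by simp
    then have "1/16 - 1 / (real j + 17) < 1/16" by linarith
    then show "0 < p" "p \<le> \<rho> j" "\<rho> j < 1/16" using True unfolding \<rho>_def max_less_iff_conj
      by auto
  qed
  have Ns: "(\<Union>j. {q. (p, q) \<in> Delta' m n \<and> q \<le> \<rho> j}) \<in> null_sets lborel"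
    using T_null[OF n \<rho>] by (intro null_sets_UN) auto
  have sub: "Pair p -` Delta' m n \<subseteq> (\<Union>j. {q. (p, q) \<in> Delta' m n \<and> q \<le> \<rho> j})"
  proof
    fix q assume q: "q \<in> Pair p -` Delta' m n"
    then have "q < 1/16" unfolding Delta_alt by (auto simp: sq_iff)
    then have "0 < 1/16 - q" by simp
    then obtain j :: nat where j: "1 / (1/16 - q) < real j" using reals_Archimedean2 by blast
    have pos: "0 < 1/16 - q" by fact
    have "1 / (real j + 17) \<le> 1/16 - q"
    proof -
      have "1 / (1/16 - q) \<le> real j + 17" using j by linarith
      then have "1 \<le> (real j + 17) * (1/16 - q)" using pos by (simp add: divide_le_eq)
      then show ?thesis by (simp add: divide_le_eq mult.commute)
    qed
    then have "q \<le> \<rho> j" unfolding \<rho>_def by linarith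
    then show "q \<in> (\<Union>j. {q. (p, q) \<in> Delta' m n \<and> q \<le> \<rho> j})" using q by auto
  qed
  show ?thesis by (rule null_sets_subset[OF Ns _ sub]) (use sets_Pair1[OF D_sets_prod] in simp)
qed

lemma D_null:
  assumes n: "n \<ge> 1"
  shows "Delta' m n \<in> null_sets (lebesgue :: (real \<times> real) measure)"
proof -
  have "emeasure (lborel \<Otimes>\<^sub>M (lborel :: real measure)) (Delta' m n)
      = (\<integral>\<^sup>+x. emeasure lborel (Pair x -` Delta' m n) \<partial>lborel)"
    by (rule lborel.emeasure_pair_measure_alt[OF D_sets_prod])
  also have "\<dots> = (\<integral>\<^sup>+x. 0 \<partial>lborel)"
    using null_setsD1[OF slice_null[OF n]] by simp
  finally have "emeasure (lborel :: (real \<times> real) measure) (Delta' m n) = 0"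
    unfolding lborel_prod by simp
  then have "Delta' m n \<in> null_sets (lborel :: (real \<times> real) measure)"
    using D_borel by auto
  then show ?thesis by (rule null_sets_completionI)
qed

theorem corollary18:
  fixes m n :: nat
  assumes "m \<ge> 1" and "n \<ge> 1"
  shows "closedin (top_of_set ({0<..<1/16} \<times> {0<..<1/16})) (Delta' m n)
         \<and> Delta' m n \<in> null_sets (lebesgue :: (real \<times> real) measure)"
  using D_closedin[of m n] D_null[OF assms(2), of m] unfolding sq_def by auto

end
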